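(* Assume the setting described in the context and let $\gamma\in\mathbb R$, $\theta\in\mathbb R^{\mathfrak d}$. Then $$V(\theta-\gamma\mathcal G(\theta))-V(\theta)=\gamma^2\|\mathcal G(\theta)\|^2+\gamma^2\Big[\sum_{k=1}^L\sum_{i=1}^{\ell_k}(k-1)|\mathcal G_{\ell_k\ell_{k-1}+i+\mathbf d_{k-1}}(\theta)|^2\Big]-4\gamma L\Big[\int_{[a,b]^{\ell_0}}\big\langle\mathcal N^{L,\theta}_\infty(x)-f(x),\mathcal N^{L,\theta}_\infty(x)-f(0)\big\rangle\,\mu(dx)\Big]$$ $$\le\gamma^2L\|\mathcal G(\theta)\|^2-4\gamma L\Big[\int_{[a,b]^{\ell_0}}\big\langle\mathcal N^{L,\theta}_\infty(x)-f(x),\mathcal N^{L,\theta}_\infty(x)-f(0)\big\rangle\,\mu(dx)\Big].$$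
   Context: Setting. Let $L,\mathfrak d\in\mathbb N=\{1,2,\dots\}$, $(\ell_k)_{k\in\mathbb N_0}\subseteq\mathbb N$, $a\in\mathbb R$, $b\in(a,\infty)$, $\mathscr A\in(0,\infty)$, $\mathscr B\in(\mathscr A,\infty)$ with $\mathfrak d=\sum_{k=1}^L\ell_k(\ell_{k-1}+1)$; let $\mathbf d_k=\sum_{h=1}^k\ell_h(\ell_{h-1}+1)$ for $k\in\mathbb N_0$. For $\theta=(\theta_1,\dots,\theta_{\mathfrak d})\in\mathbb R^{\mathfrak d}$, $k\in\{1,\dots,L\}$, $i\in\{1,\dots,\ell_k\}$, $j\in\{1,\dots,\ell_{k-1}\}$ let $\mathfrak w^{k,\theta}_{i,j}=\theta_{(i-1)\ell_{k-1}+j+\mathbf d_{k-1}}$ and $\mathfrak b^{k,\theta}_i=\theta_{\ell_k\ell_{k-1}+i+\mathbf d_{k-1}}$, let $\mathfrak w^{k,\theta}=(\mathfrak w^{k,\theta}_{i,j})_{i,j}\in\mathbb R^{\ell_k\times\ell_{k-1}}$, $\mathfrak b^{k,\theta}=(\mathfrak b^{k,\theta}_1,\dots,\mathfrak b^{k,\theta}_{\ell_k})\in\mathbb R^{\ell_k}$, and $\mathcal A^\theta_k\colon\mathbb R^{\ell_{k-1}}\to\mathbb R^{\ell_k}$, $\mathcal A^\theta_k(x)=\mathfrak b^{k,\theta}+\mathfrak w^{k,\theta}x$. Let $\mathscr R_\infty(x)=\max\{x,0\}$ and let $\mathscr R_r\colon\mathbb R\to\mathbb R$, $r\in[1,\infty)$,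 satisfy for all $r\in[1,\infty)$: $\mathscr R_r\in C^1(\mathbb R,\mathbb R)$, $\mathscr R_r(x)=0$ for all $x\le\mathscr A r^{-1}$, $0\le\mathscr R_r(y)\le\max\{y,0\}$ for all $y\in\mathbb R$, $\mathscr R_r(z)=z$ for all $z\ge\mathscr B r^{-1}$; assume $\sup_{r\in[1,\infty)}\sup_{x\in\mathbb R}|(\mathscr R_r)'(x)|<\infty$. $\|\cdot\|$, $\langle\cdot,\cdot\rangle$ are the Euclidean norm and scalar product on each $\mathbb R^n$; for $r\in[1,\infty]$, $\mathfrak M_r(x_1,\dots,x_n)=(\mathscr R_r(x_1),\dots,\mathscr R_r(x_n))$. For $r\in[1,\infty]$, $\theta\in\mathbb R^{\mathfrak d}$ define $\mathcal N^{k,\theta}_r\colon\mathbb R^{\ell_0}\to\mathbb R^{\ell_k}$, $k\in\{1,\dots,L\}$, by $\mathcal N^{1,\theta}_r=\mathcal A^\theta_1$ and $\mathcal N^{k+1,\theta}_r(x)=\mathcal A^\theta_{k+1}(\mathfrak M_{r^{1/k}}(\mathcal N^{k,\theta}_r(x)))$ (with $\infty^{1/k}=\infty$). Let $\mu$ be a measure on the Borel $\sigma$-algebra of $[a,b]^{\ell_0}$ with $\mu([a,b]^{\ell_0})\in\mathbb R$, let $f=(f_1,\dots,f_{\ell_L})\colon\mathbb R^{\ell_0}\to\mathbb R^{\ell_L}$ be measurable (only its values on $[a,b]^{\ell_0}$ and the value $f(0)$ enter), and for $r\in[1,\infty]$ let $\mathcal L_r\colon\mathbb R^{\mathfrak d}\to\mathbb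 R$ be given by $\mathcal L_r(\theta)=\int_{[a,b]^{\ell_0}}\|\mathcal N^{L,\theta}_r(x)-f(x)\|^2\,\mu(dx)$ (these integrals are real numbers as part of the setting). Let $\mathcal G=(\mathcal G_1,\dots,\mathcal G_{\mathfrak d})\colon\mathbb R^{\mathfrak d}\to\mathbb R^{\mathfrak d}$ satisfy $\mathcal G(\theta)=\lim_{r\to\infty}(\nabla\mathcal L_r)(\theta)$ for every $\theta$ for which $((\nabla\mathcal L_r)(\theta))_{r\in[1,\infty)}$ is convergent as $r\to\infty$. Let $V\colon\mathbb R^{\mathfrak d}\to\mathbb R$, $V(\theta)=\big[\sum_{k=1}^L\big(k\|\mathfrak b^{k,\theta}\|^2+\sum_{i=1}^{\ell_k}\sum_{j=1}^{\ell_{k-1}}|\mathfrak w^{k,\theta}_{i,j}|^2\big)\big]-2L\langle f(0),\mathfrak b^{L,\theta}\rangle$. *)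

theory Defs
  imports "HOL-Analysis.Analysis" "HOL-Probability.Probability"
begin

text \<open>Parameter vectors theta in R^d are represented as functions nat => real, of which
only the coordinates 1..d matter.  Vectors in R^n (inputs, layer outputs) are likewise
functions nat => real of which only the coordinates 1..n matter.\<close>

definition dd :: "(nat \<Rightarrow> nat) \<Rightarrow> nat \<Rightarrow> nat" where
  "dd ls k = (\<Sum>h = 1..k. ls h * (ls (h - 1) + 1))"

definition wt :: "(nat \<Rightarrow> nat) \<Rightarrow> (nat \<Rightarrow> real) \<Rightarrow> nat \<Rightarrow> nat \<Rightarrow> nat \<Rightarrow> real" where
  "wt ls \<theta> k i j = \<theta> ((i - 1) * ls (k - 1) + j + dd ls (k - 1))"

definition bs :: "(nat \<Rightarrow> nat) \<Rightarrow> (nat \<Rightarrow> real) \<Rightarrow> nat \<Rightarrow> nat \<Rightarrow> real" where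
  "bs ls \<theta> k i = \<theta> (ls k * ls (k - 1) + i + dd ls (k - 1))"

definition aff :: "(nat \<Rightarrow> nat) \<Rightarrow> (nat \<Rightarrow> real) \<Rightarrow> nat \<Rightarrow> (nat \<Rightarrow> real) \<Rightarrow> nat \<Rightarrow> real" where
  "aff ls \<theta> k y = (\<lambda>i. bs ls \<theta> k i + (\<Sum>j = 1..ls (k - 1). wt ls \<theta> k i j * y j))"

fun netw :: "(nat \<Rightarrow> real \<Rightarrow> real) \<Rightarrow> (nat \<Rightarrow> nat) \<Rightarrow> (nat \<Rightarrow> real) \<Rightarrow> nat
    \<Rightarrow> (nat \<Rightarrow> real) \<Rightarrow> nat \<Rightarrow> real" where
  "netw act ls \<theta> 0 x = x"
| "netw act ls \<theta> (Suc 0) x = aff ls \<theta> 1 x"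
| "netw act ls \<theta> (Suc (Suc m)) x =
     aff ls \<theta> (Suc (Suc m)) (\<lambda>j. act (Suc m) (netw act ls \<theta> (Suc m) x j))"

definition act_r :: "(real \<Rightarrow> real \<Rightarrow> real) \<Rightarrow> real \<Rightarrow> nat \<Rightarrow> real \<Rightarrow> real" where
  "act_r R r k = R (r powr (1 / real k))"

definition act_inf :: "nat \<Rightarrow> real \<Rightarrow> real" where
  "act_inf k x = max x 0"

definition cube :: "nat \<Rightarrow> real \<Rightarrow> real \<Rightarrow> (nat \<Rightarrow> real) set" where
  "cube n a b = PiE {1..n} (\<lambda>_. {a..b})"

definition zvec :: "nat \<Rightarrow> nat \<Rightarrow> real" where
  "zvec n = restrict (\<lambda>_. 0) {1..n}"

definition sqerr :: "(nat \<Rightarrow> real \<Rightarrow> real) \<Rightarrow> (nat \<Rightarrow> nat) \<Rightarrow> nat \<Rightarrow> ((nat \<Rightarrow> real) \<Rightarrow> nat \<Rightarrow> real)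
    \<Rightarrow> (nat \<Rightarrow> real) \<Rightarrow> (nat \<Rightarrow> real) \<Rightarrow> real" where
  "sqerr act ls L f \<theta> x = (\<Sum>i = 1..ls L. (netw act ls \<theta> L x i - f x i)\<^sup>2)"

definition risk :: "(real \<Rightarrow> real \<Rightarrow> real) \<Rightarrow> (nat \<Rightarrow> nat) \<Rightarrow> nat \<Rightarrow> (nat \<Rightarrow> real) measure
    \<Rightarrow> ((nat \<Rightarrow> real) \<Rightarrow> nat \<Rightarrow> real) \<Rightarrow> real \<Rightarrow> (nat \<Rightarrow> real) \<Rightarrow> real" where
  "risk R ls L \<mu> f r \<theta> = integral\<^sup>L \<mu> (sqerr (act_r R r) ls L f \<theta>)"

definition grad_risk :: "(real \<Rightarrow> real \<Rightarrow> real) \<Rightarrow> (nat \<Rightarrow> nat) \<Rightarrow> nat \<Rightarrow> (nat \<Rightarrow> real) measure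
    \<Rightarrow> ((nat \<Rightarrow> real) \<Rightarrow> nat \<Rightarrow> real) \<Rightarrow> real \<Rightarrow> (nat \<Rightarrow> real) \<Rightarrow> nat \<Rightarrow> real" where
  "grad_risk R ls L \<mu> f r \<theta> i =
     (if i \<in> {1..dd ls L} then deriv (\<lambda>t. risk R ls L \<mu> f r (\<theta>(i := t))) (\<theta> i) else 0)"

definition Vfun :: "(nat \<Rightarrow> nat) \<Rightarrow> nat \<Rightarrow> (nat \<Rightarrow> real) \<Rightarrow> (nat \<Rightarrow> real) \<Rightarrow> real" where
  "Vfun ls L f0 \<theta> =
     (\<Sum>k = 1..L. real k * (\<Sum>i = 1..ls k. (bs ls \<theta> k i)\<^sup>2)
                 + (\<Sum>i = 1..ls k. \<Sum>j = 1..ls (k - 1). (wt ls \<theta> k i j)\<^sup>2))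
     - 2 * real L * (\<Sum>i = 1..ls L. f0 i * bs ls \<theta> L i)"

end

theory Submission
  imports Defs
begin

definition bidx :: "(nat \<Rightarrow> nat) \<Rightarrow> nat \<Rightarrow> nat \<Rightarrow> nat" where
  "bidx ls k i = ls k * ls (k - 1) + i + dd ls (k - 1)"
definition widx :: "(nat \<Rightarrow> nat) \<Rightarrow> nat \<Rightarrow> nat \<Rightarrow> nat \<Rightarrow> nat" where
  "widx ls k i j = (i - 1) * ls (k - 1) + j + dd ls (k - 1)"

lemma bs_eq: "bs ls \<theta> k i = \<theta> (bidx ls k i)" by (simp add: bs_def bidx_def)
lemma wt_eq: "wt ls \<theta> k i j = \<theta> (widx ls k i j)" by (simp add: wt_def widx_def)

definition daff :: "(nat \<Rightarrow> nat) \<Rightarrow> (nat \<Rightarrow> real) \<Rightarrow> nat \<Rightarrow> nat \<Rightarrow> (nat \<Rightarrow> real) \<Rightarrow> (nat \<Rightarrow> real) \<Rightarrow> nat \<Rightarrow> real" where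
  "daff ls \<theta> k p y dy = (\<lambda>i. (if p = bidx ls k i then 1 else 0)
      + (\<Sum>j = 1..ls (k - 1). (if p = widx ls k i j then y j else 0))
      + (\<Sum>j = 1..ls (k - 1). wt ls \<theta> k i j * dy j))"

fun dnet :: "(nat \<Rightarrow> real \<Rightarrow> real) \<Rightarrow> (nat \<Rightarrow> real \<Rightarrow> real) \<Rightarrow> (nat \<Rightarrow> nat) \<Rightarrow> (nat \<Rightarrow> real) \<Rightarrow> nat \<Rightarrow> nat
    \<Rightarrow> (nat \<Rightarrow> real) \<Rightarrow> nat \<Rightarrow> real" where
  "dnet act dact ls \<theta> p 0 x = (\<lambda>_. 0)"
| "dnet act dact ls \<theta> p (Suc 0) x = daff ls \<theta> 1 p x (\<lambda>_. 0)"
| "dnet act dact ls \<theta> p (Suc (Suc m)) x =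
     daff ls \<theta> (Suc (Suc m)) p (\<lambda>j. act (Suc m) (netw act ls \<theta> (Suc m) x j))
        (\<lambda>j. dact (Suc m) (netw act ls \<theta> (Suc m) x j) * dnet act dact ls \<theta> p (Suc m) x j)"

lemma deriv_upd: "((\<lambda>t. (\<theta>(p := t)) q) has_real_derivative (if p = q then 1 else 0)) (at (\<theta> p))"
  by (cases "p = q") (auto intro: derivative_eq_intros)

lemma daff_deriv:
  assumes "\<And>j. ((\<lambda>t. Y t j) has_real_derivative dY j) (at (\<theta> p))"
  shows "((\<lambda>t. aff ls (\<theta>(p := t)) k (Y t) i) has_real_derivative daff ls \<theta> k p (Y (\<theta> p)) dY i) (at (\<theta> p))"
proof -
  have 1: "((\<lambda>t. (\<theta>(p := t)) (bidx ls k i)) has_real_derivative (if p = bidx ls k i then 1 else 0)) (at (\<theta> p))"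
    by (rule deriv_upd)
  have 2: "((\<lambda>t. (\<Sum>j = 1..ls (k - 1). (\<theta>(p := t)) (widx ls k i j) * Y t j)) has_real_derivative
      (\<Sum>j = 1..ls (k - 1). (if p = widx ls k i j then 1 else 0) * Y (\<theta> p) j + \<theta> (widx ls k i j) * dY j)) (at (\<theta> p))"
    apply (rule DERIV_sum)
    subgoal for j using DERIV_mult[OF deriv_upd[of \<theta> p "widx ls k i j"] assms[of j]] by (simp add: mult.commute)
    done
  have e: "(\<Sum>j = 1..ls (k - 1). (if p = widx ls k i j then 1 else 0) * Y (\<theta> p) j + \<theta> (widx ls k i j) * dY j)
     = (\<Sum>j = 1..ls (k - 1). (if p = widx ls k i j then Y (\<theta> p) j else 0)) + (\<Sum>j = 1..ls (k - 1). wt ls \<theta> k i j * dY j)"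
    unfolding sum.distrib[symmetric] wt_eq by (rule sum.cong) auto
  show ?thesis
    unfolding aff_def daff_def bs_eq wt_eq
    using DERIV_add[OF 1 2] e by (simp add: add.assoc wt_eq)
qed

lemma netw_deriv:
  assumes act: "\<And>k y. (act k has_real_derivative dact k y) (at y)"
  shows "((\<lambda>t. netw act ls (\<theta>(p := t)) k x m) has_real_derivative dnet act dact ls \<theta> p k x m) (at (\<theta> p))"
proof (induction k arbitrary: m rule: nat_less_induct)
  case (1 n)
  show ?case
  proof (cases n)
    case 0 then show ?thesis by simp
  next
    case (Suc n') note n = this
    show ?thesis
    proof (cases n')
      case 0
      have "((\<lambda>t. aff ls (\<theta>(p:=t)) 1 x m) has_real_derivative daff ls \<theta> 1 p x (\<lambda>_. 0) m) (at (\<theta> p))"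
        by (rule daff_deriv[where Y = "\<lambda>t. x"]) simp
      then show ?thesis using n 0 by (simp only: netw.simps dnet.simps)
    next
      case (Suc k)
      have ih: "((\<lambda>t. netw act ls (\<theta>(p := t)) (Suc k) x j) has_real_derivative dnet act dact ls \<theta> p (Suc k) x j) (at (\<theta> p))" for j
      proof -
        have "Suc k < n" using n Suc by simp
        then show ?thesis using 1 by blast
      qed
      have "((\<lambda>t. act (Suc k) (netw act ls (\<theta>(p := t)) (Suc k) x j)) has_real_derivative
             dact (Suc k) (netw act ls \<theta> (Suc k) x j) * dnet act dact ls \<theta> p (Suc k) x j) (at (\<theta> p))" for j
        using DERIV_chain2[OF act ih] by simp
      from daff_deriv[where Y="\<lambda>t j. act (Suc k) (netw act ls (\<theta>(p := t)) (Suc k) x j)"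
         and dY = "\<lambda>j. dact (Suc k) (netw act ls \<theta> (Suc k) x j) * dnet act dact ls \<theta> p (Suc k) x j" and \<theta>=\<theta> and p=p and ls=ls and k="Suc (Suc k)" and i=m, OF this]
      show ?thesis using n Suc by (simp only: netw.simps dnet.simps fun_upd_triv)
    qed
  qed
qed

lemma dd_Suc: "dd ls (Suc k) = dd ls k + ls (Suc k) * (ls k + 1)"
  by (simp add: dd_def)

lemma dd_mono: "k \<le> k' \<Longrightarrow> dd ls k \<le> dd ls k'"
  by (induction k' rule: dec_induct) (auto simp: dd_Suc)

lemma widx_lo: "1 \<le> j \<Longrightarrow> dd ls (k - 1) < widx ls k i j"
  by (simp add: widx_def)

lemma widx_hi: "1 \<le> i \<Longrightarrow> i \<le> ls k \<Longrightarrow> j \<le> ls (k - 1) \<Longrightarrow> widx ls k i j \<le> dd ls (k - 1) + ls k * ls (k - 1)"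
proof -
  assume a: "1 \<le> i" "i \<le> ls k" "j \<le> ls (k - 1)"
  have "(i - 1) * ls (k - 1) + j \<le> (i - 1) * ls (k - 1) + ls (k - 1)" using a by simp
  also have "\<dots> = i * ls (k - 1)" using a by (cases i) auto
  also have "\<dots> \<le> ls k * ls (k - 1)" using a by simp
  finally show ?thesis by (simp add: widx_def)
qed

lemma bidx_lo: "1 \<le> i \<Longrightarrow> dd ls (k - 1) + ls k * ls (k - 1) < bidx ls k i"
  by (simp add: bidx_def)

lemma bidx_hi: "1 \<le> k \<Longrightarrow> i \<le> ls k \<Longrightarrow> bidx ls k i \<le> dd ls k"
  using dd_Suc[of ls "k - 1"] by (cases k) (auto simp: bidx_def)

lemma bidx_range: "1 \<le> k \<Longrightarrow> k \<le> L \<Longrightarrow> i \<in> {1..ls k} \<Longrightarrow> bidx ls k i \<in> {1..dd ls L}"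
  using bidx_hi[of k i ls] dd_mono[of k L ls] by (auto simp: bidx_def)

lemma widx_range: "1 \<le> k \<Longrightarrow> k \<le> L \<Longrightarrow> i \<in> {1..ls k} \<Longrightarrow> j \<in> {1..ls (k - 1)} \<Longrightarrow> widx ls k i j \<in> {1..dd ls L}"
  using widx_hi[of i ls k j] bidx_lo[of i ls k] bidx_hi[of k i ls] dd_mono[of k L ls] by (auto simp: widx_def)

lemma layer_eq:
  assumes "1 \<le> k" "1 \<le> k'" "dd ls (k - 1) < q" "q \<le> dd ls k" "dd ls (k' - 1) < q" "q \<le> dd ls k'"
  shows "k = k'"
proof (rule ccontr)
  assume "k \<noteq> k'"
  then consider "k < k'" | "k' < k" by linarith
  then show False
  proof cases
    case 1 then have "dd ls k \<le> dd ls (k' - 1)" by (intro dd_mono) auto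
    then show False using assms by linarith
  next
    case 2 then have "dd ls k' \<le> dd ls (k - 1)" by (intro dd_mono) auto
    then show False using assms by linarith
  qed
qed

lemma mixed_inj:
  assumes "1 \<le> j" "j \<le> (n::nat)" "1 \<le> j'" "j' \<le> n" "i0 * n + j = i1 * n + j'"
  shows "i0 = i1 \<and> j = j'"
proof -
  have "\<not> i0 < i1"
  proof
    assume "i0 < i1"
    then have "Suc i0 * n \<le> i1 * n" by (intro mult_le_mono1) auto
    then show False using assms by simp
  qed
  moreover have "\<not> i1 < i0"
  proof
    assume "i1 < i0"
    then have "Suc i1 * n \<le> i0 * n" by (intro mult_le_mono1) auto
    then show False using assms by simp
  qed
  ultimately show ?thesis using assms by simp
qed

lemma bidx_layer: "1 \<le> k \<Longrightarrow> i \<in> {1..ls k} \<Longrightarrow> dd ls (k - 1) < bidx ls k i \<and> bidx ls k i \<le> dd ls k"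
  using bidx_hi[of k i ls] by (auto simp: bidx_def)

lemma widx_layer: "1 \<le> k \<Longrightarrow> i \<in> {1..ls k} \<Longrightarrow> j \<in> {1..ls (k - 1)} \<Longrightarrow> dd ls (k - 1) < widx ls k i j \<and> widx ls k i j < bidx ls k i"
proof -
  assume a: "1 \<le> k" "i \<in> {1..ls k}" "j \<in> {1..ls (k - 1)}"
  have "widx ls k i j \<le> dd ls (k - 1) + ls k * ls (k - 1)" using a by (intro widx_hi) auto
  also have "\<dots> < bidx ls k i" using a by (intro bidx_lo) auto
  finally show ?thesis using a by (auto simp: widx_def)
qed

lemma bidx_bidx:
  assumes "1 \<le> k" "1 \<le> k'" "i \<in> {1..ls k}" "i' \<in> {1..ls k'}"
  shows "bidx ls k i = bidx ls k' i' \<longleftrightarrow> k = k' \<and> i = i'"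
proof
  assume e: "bidx ls k i = bidx ls k' i'"
  have l1: "dd ls (k - 1) < bidx ls k i \<and> bidx ls k i \<le> dd ls k" using assms by (intro bidx_layer)
  have l2: "dd ls (k' - 1) < bidx ls k i \<and> bidx ls k i \<le> dd ls k'" unfolding e using assms by (intro bidx_layer)
  have "k = k'" using layer_eq[of k k' ls "bidx ls k i"] l1 l2 assms(1,2) by blast
  then show "k = k' \<and> i = i'" using e by (simp add: bidx_def)
qed auto

lemma widx_bidx:
  assumes "1 \<le> k" "1 \<le> k'" "i \<in> {1..ls k}" "j \<in> {1..ls (k - 1)}" "i' \<in> {1..ls k'}"
  shows "widx ls k i j \<noteq> bidx ls k' i'"
proof
  assume e: "widx ls k i j = bidx ls k' i'"
  have w: "dd ls (k - 1) < widx ls k i j \<and> widx ls k i j < bidx ls k i" using assms by (intro widx_layer)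
  have b: "dd ls (k - 1) < bidx ls k i \<and> bidx ls k i \<le> dd ls k" using assms by (intro bidx_layer)
  have l2: "dd ls (k' - 1) < widx ls k i j \<and> widx ls k i j \<le> dd ls k'" unfolding e using assms by (intro bidx_layer)
  have "k = k'" using layer_eq[of k k' ls "widx ls k i j"] w b l2 assms(1,2) by linarith
  then have "widx ls k i j \<le> dd ls (k - 1) + ls k * ls (k - 1)" "dd ls (k - 1) + ls k * ls (k - 1) < bidx ls k' i'"
    using assms widx_hi[of i ls k j] bidx_lo[of i' ls k'] by auto
  then show False using e by linarith
qed

lemma widx_widx:
  assumes "1 \<le> k" "1 \<le> k'" "i \<in> {1..ls k}" "j \<in> {1..ls (k - 1)}" "i' \<in> {1..ls k'}" "j' \<in> {1..ls (k' - 1)}"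
  shows "widx ls k i j = widx ls k' i' j' \<longleftrightarrow> k = k' \<and> i = i' \<and> j = j'"
proof
  assume e: "widx ls k i j = widx ls k' i' j'"
  have w: "dd ls (k - 1) < widx ls k i j \<and> widx ls k i j < bidx ls k i" using assms by (intro widx_layer)
  have b: "dd ls (k - 1) < bidx ls k i \<and> bidx ls k i \<le> dd ls k" using assms by (intro bidx_layer)
  have w2: "dd ls (k' - 1) < widx ls k' i' j' \<and> widx ls k' i' j' < bidx ls k' i'" using assms by (intro widx_layer)
  have b2: "dd ls (k' - 1) < bidx ls k' i' \<and> bidx ls k' i' \<le> dd ls k'" using assms by (intro bidx_layer)
  have "k = k'" using layer_eq[of k k' ls "widx ls k i j"] w b w2 b2 e assms(1,2) by linarith
  then have "(i - 1) * ls (k - 1) + j = (i' - 1) * ls (k - 1) + j'" using e by (simp add: widx_def)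
  from mixed_inj[OF _ _ _ _ this] have "i - 1 = i' - 1 \<and> j = j'" using assms \<open>k = k'\<close> by auto
  then show "k = k' \<and> i = i' \<and> j = j'" using assms \<open>k = k'\<close> by auto
qed auto

definition inp :: "(nat \<Rightarrow> real \<Rightarrow> real) \<Rightarrow> (nat \<Rightarrow> nat) \<Rightarrow> (nat \<Rightarrow> real) \<Rightarrow> nat \<Rightarrow> (nat \<Rightarrow> real) \<Rightarrow> nat \<Rightarrow> real" where
  "inp act ls \<theta> k x = (if k = 0 then x else (\<lambda>j. act k (netw act ls \<theta> k x j)))"

lemma netw_Suc: "netw act ls \<theta> (Suc k) x = aff ls \<theta> (Suc k) (inp act ls \<theta> k x)"
  by (cases k) (auto simp: inp_def)

lemma dnet_Suc: "dnet act dact ls \<theta> p (Suc k) x = daff ls \<theta> (Suc k) p (inp act ls \<theta> k x)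
     (\<lambda>j. dact k (netw act ls \<theta> k x j) * dnet act dact ls \<theta> p k x j)"
  by (cases k) (auto simp: inp_def)

fun nb :: "(nat \<Rightarrow> nat) \<Rightarrow> real \<Rightarrow> real \<Rightarrow> nat \<Rightarrow> real" where
  "nb ls T X 0 = X"
| "nb ls T X (Suc k) = T + real (ls k) * T * nb ls T X k"

fun db :: "(nat \<Rightarrow> nat) \<Rightarrow> real \<Rightarrow> real \<Rightarrow> real \<Rightarrow> nat \<Rightarrow> real" where
  "db ls T X C 0 = 0"
| "db ls T X C (Suc k) = 1 + real (ls k) * nb ls T X k + real (ls k) * T * C * db ls T X C k"

lemma sum_bound_const:
  fixes g :: "nat \<Rightarrow> real"
  assumes "\<And>j. j \<in> A \<Longrightarrow> \<bar>g j\<bar> \<le> c" "finite A"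
  shows "\<bar>sum g A\<bar> \<le> real (card A) * c"
proof -
  have "\<bar>sum g A\<bar> \<le> sum (\<lambda>j. \<bar>g j\<bar>) A" by (rule sum_abs)
  also have "\<dots> \<le> sum (\<lambda>j. c) A" using assms by (intro sum_mono) auto
  finally show ?thesis by simp
qed

lemma aff_bound:
  assumes T: "\<bar>bs ls \<theta> k i\<bar> \<le> T" "\<forall>j\<in>{1..ls (k - 1)}. \<bar>wt ls \<theta> k i j\<bar> \<le> T"
    and Y: "\<forall>j\<in>{1..ls (k - 1)}. \<bar>y j\<bar> \<le> Y" and T0: "0 \<le> T"
  shows "\<bar>aff ls \<theta> k y i\<bar> \<le> T + real (ls (k - 1)) * T * Y"
proof -
  have "\<bar>\<Sum>j = 1..ls (k - 1). wt ls \<theta> k i j * y j\<bar> \<le> real (card {1..ls (k - 1)}) * (T * Y)"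
    by (rule sum_bound_const) (use T Y T0 in \<open>auto simp: abs_mult intro!: mult_mono\<close>)
  then show ?thesis using T unfolding aff_def by (simp add: abs_triangle_ineq order_trans[OF abs_triangle_ineq] mult.assoc)
qed

lemma daff_bound:
  assumes T: "\<forall>j\<in>{1..ls (k - 1)}. \<bar>wt ls \<theta> k i j\<bar> \<le> T"
    and Y: "\<forall>j\<in>{1..ls (k - 1)}. \<bar>y j\<bar> \<le> Y" and D: "\<forall>j\<in>{1..ls (k - 1)}. \<bar>dy j\<bar> \<le> D" and T0: "0 \<le> T"
  shows "\<bar>daff ls \<theta> k p y dy i\<bar> \<le> 1 + real (ls (k - 1)) * Y + real (ls (k - 1)) * T * D"
proof -
  have 1: "\<bar>\<Sum>j = 1..ls (k - 1). wt ls \<theta> k i j * dy j\<bar> \<le> real (card {1..ls (k - 1)}) * (T * D)"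
    by (rule sum_bound_const) (use T D T0 in \<open>auto simp: abs_mult intro!: mult_mono\<close>)
  have 2: "\<bar>\<Sum>j = 1..ls (k - 1). (if p = widx ls k i j then y j else 0)\<bar> \<le> real (card {1..ls (k - 1)}) * Y"
    by (rule sum_bound_const) (use Y in \<open>auto\<close>)
  have 3: "\<bar>(if p = bidx ls k i then 1 else 0::real)\<bar> \<le> 1" by simp
  have tri3: "\<bar>a + b + c\<bar> \<le> A + B + Cc" if "\<bar>a\<bar> \<le> A" "\<bar>b\<bar> \<le> B" "\<bar>c\<bar> \<le> Cc" for a b c A B Cc :: real
    using that by arith
  have e: "real (card {1..ls (k - 1)}) = real (ls (k - 1))" by simp
  show ?thesis unfolding daff_def using tri3[OF 3 2 1] unfolding e by (simp only: mult.assoc)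
qed

lemma net_bounds:
  assumes T0: "0 \<le> T" and X0: "0 \<le> X" and C0: "0 \<le> C"
    and hth: "\<forall>q\<in>{1..dd ls L}. \<bar>\<theta> q\<bar> \<le> T" and hx: "\<forall>j\<in>{1..ls 0}. \<bar>x j\<bar> \<le> X"
    and hact: "\<forall>k y. \<bar>act k y\<bar> \<le> \<bar>y\<bar>" and hdact: "\<forall>k y. \<bar>dact k y\<bar> \<le> C"
  shows "k \<le> L \<Longrightarrow> \<forall>m\<in>{1..ls k}. \<bar>netw act ls \<theta> k x m\<bar> \<le> nb ls T X k \<and> \<bar>dnet act dact ls \<theta> p k x m\<bar> \<le> db ls T X C k"
proof (induction k)
  case 0 then show ?case using hx by simp
next
  case (Suc k)
  then have ih: "\<forall>m\<in>{1..ls k}. \<bar>netw act ls \<theta> k x m\<bar> \<le> nb ls T X k \<and> \<bar>dnet act dact ls \<theta> p k x m\<bar> \<le> db ls T X C k" by simp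
  have inpb: "\<forall>j\<in>{1..ls k}. \<bar>inp act ls \<theta> k x j\<bar> \<le> nb ls T X k"
    using ih hact by (auto simp: inp_def intro: order_trans)
  have dyb: "\<forall>j\<in>{1..ls k}. \<bar>dact k (netw act ls \<theta> k x j) * dnet act dact ls \<theta> p k x j\<bar> \<le> C * db ls T X C k"
    using ih hdact C0 by (auto simp: abs_mult intro!: mult_mono)
  show ?case
  proof
    fix m assume m: "m \<in> {1..ls (Suc k)}"
    have wb: "\<forall>j\<in>{1..ls (Suc k - 1)}. \<bar>wt ls \<theta> (Suc k) m j\<bar> \<le> T"
      using hth widx_range[of "Suc k" L m ls] Suc.prems m by (auto simp: wt_eq)
    have bb: "\<bar>bs ls \<theta> (Suc k) m\<bar> \<le> T"
      using hth bidx_range[of "Suc k" L m ls] Suc.prems m by (auto simp: bs_eq)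
    have "\<bar>netw act ls \<theta> (Suc k) x m\<bar> \<le> nb ls T X (Suc k)"
      unfolding netw_Suc using aff_bound[OF bb wb _ T0, of "inp act ls \<theta> k x" "nb ls T X k"] inpb by simp
    moreover have "\<bar>dnet act dact ls \<theta> p (Suc k) x m\<bar> \<le> db ls T X C (Suc k)"
      unfolding dnet_Suc using daff_bound[OF wb _ _ T0, of "inp act ls \<theta> k x" "nb ls T X k" _ "C * db ls T X C k" p] inpb dyb
      by (simp add: mult.assoc mult.commute mult.left_commute)
    ultimately show "\<bar>netw act ls \<theta> (Suc k) x m\<bar> \<le> nb ls T X (Suc k) \<and> \<bar>dnet act dact ls \<theta> p (Suc k) x m\<bar> \<le> db ls T X C (Suc k)" by simp
  qed
qed

lemma DERIV_integral:
  fixes g :: "real \<Rightarrow> 'a \<Rightarrow> real" and M :: "'a measure"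
  assumes dpos: "0 < \<delta>"
    and int: "\<And>t. integrable M (g t)"
    and der: "\<And>x t. x \<in> space M \<Longrightarrow> \<bar>t - t0\<bar> < \<delta> \<Longrightarrow> ((\<lambda>s. g s x) has_real_derivative g' t x) (at t)"
    and bnd: "\<And>x t. x \<in> space M \<Longrightarrow> \<bar>t - t0\<bar> < \<delta> \<Longrightarrow> \<bar>g' t x\<bar> \<le> h x"
    and inth: "integrable M h"
  shows "integrable M (g' t0) \<and> ((\<lambda>t. integral\<^sup>L M (g t)) has_real_derivative integral\<^sup>L M (g' t0)) (at t0)"
proof -
  define q where "q s x = (g s x - g t0 x) / (s - t0)" for s x
  have qb: "\<bar>q s x\<bar> \<le> h x" if x: "x \<in> space M" and s: "\<bar>s - t0\<bar> < \<delta>" "s \<noteq> t0" for s x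
  proof (cases "t0 < s")
    case True
    have "\<exists>z>t0. z < s \<and> g s x - g t0 x = (s - t0) * g' z x"
      by (rule MVT2[OF True]) (use der[OF x] s in auto)
    then obtain z where z: "t0 < z" "z < s" "g s x - g t0 x = (s - t0) * g' z x" by blast
    then have "q s x = g' z x" using True by (simp add: q_def)
    then show ?thesis using bnd[OF x, of z] z s by auto
  next
    case False
    then have lt: "s < t0" using s by auto
    have "\<exists>z>s. z < t0 \<and> g t0 x - g s x = (t0 - s) * g' z x"
      by (rule MVT2[OF lt]) (use der[OF x] s in auto)
    then obtain z where z: "s < z" "z < t0" "g t0 x - g s x = (t0 - s) * g' z x" by blast
    then have "q s x = g' z x" using lt by (simp add: q_def field_simps)
    then show ?thesis using bnd[OF x, of z] z s by auto
  qed
  have ql: "((\<lambda>s. q s x) \<longlongrightarrow> g' t0 x) (at t0)" if x: "x \<in> space M" for x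
    using der[OF x, of t0] dpos unfolding has_field_derivative_iff q_def by simp
  have gm: "g t \<in> borel_measurable M" for t using int by auto
  have qm: "(\<lambda>x. q s x) \<in> borel_measurable M" for s unfolding q_def using gm by measurable
  define X where "X n = t0 + (\<delta>/2) * inverse (real (Suc n))" for n
  have Xl: "X \<longlonglongrightarrow> t0" unfolding X_def
    using tendsto_add[OF tendsto_const tendsto_mult[OF tendsto_const LIMSEQ_inverse_real_of_nat], of t0 "\<delta>/2"] by simp
  have Xn: "X n \<noteq> t0" for n using dpos by (simp add: X_def)
  have g'm: "g' t0 \<in> borel_measurable M"
  proof (rule borel_measurable_LIMSEQ_real[where u = "\<lambda>n x. q (X n) x"])
    fix x assume x: "x \<in> space M"
    show "(\<lambda>n. q (X n) x) \<longlonglongrightarrow> g' t0 x"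
      using ql[OF x] Xl Xn unfolding tendsto_at_iff_sequentially by (auto simp: comp_def)
  qed (rule qm)
  have g'i: "integrable M (g' t0)"
    by (rule Bochner_Integration.integrable_bound[OF inth g'm]) (use bnd dpos in \<open>auto intro!: AE_I2 order_trans[OF _ abs_ge_self]\<close>)
  have "((\<lambda>t. integral\<^sup>L M (g t)) has_real_derivative integral\<^sup>L M (g' t0)) (at t0)"
    unfolding has_field_derivative_iff tendsto_at_iff_sequentially
  proof (intro allI impI)
    fix Y :: "nat \<Rightarrow> real" assume Y: "\<forall>i. Y i \<in> UNIV - {t0}" "Y \<longlonglongrightarrow> t0"
    define s where "s n x = (if \<bar>Y n - t0\<bar> < \<delta> then q (Y n) x else g' t0 x)" for n x
    have ev: "eventually (\<lambda>n. \<bar>Y n - t0\<bar> < \<delta>) sequentially"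
      using Y(2) dpos unfolding tendsto_iff dist_real_def by auto
    have "(\<lambda>n. integral\<^sup>L M (s n)) \<longlonglongrightarrow> integral\<^sup>L M (g' t0)"
    proof (rule integral_dominated_convergence[where w = h])
      show "s n \<in> borel_measurable M" for n unfolding s_def using qm g'm by (cases "\<bar>Y n - t0\<bar> < \<delta>") auto
      show "AE x in M. (\<lambda>n. s n x) \<longlonglongrightarrow> g' t0 x"
      proof (rule AE_I2)
        fix x assume x: "x \<in> space M"
        have "(\<lambda>n. q (Y n) x) \<longlonglongrightarrow> g' t0 x"
          using ql[OF x] Y unfolding tendsto_at_iff_sequentially by (auto simp: comp_def)
        then show "(\<lambda>n. s n x) \<longlonglongrightarrow> g' t0 x"
          by (rule Lim_transform_eventually) (use ev in \<open>auto simp: s_def elim: eventually_mono\<close>)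
      qed
      show "AE x in M. norm (s n x) \<le> h x" for n
        using qb Y(1) bnd dpos by (auto simp: s_def intro!: AE_I2)
    qed (use g'm inth in auto)
    moreover have "eventually (\<lambda>n. integral\<^sup>L M (s n) = (integral\<^sup>L M (g (Y n)) - integral\<^sup>L M (g t0)) / (Y n - t0)) sequentially"
      using ev
    proof eventually_elim
      case (elim n)
      then have "s n = (\<lambda>x. (g (Y n) x - g t0 x) / (Y n - t0))"
        by (simp add: s_def q_def fun_eq_iff)
      then have "integral\<^sup>L M (s n) = integral\<^sup>L M (\<lambda>x. (g (Y n) x - g t0 x) / (Y n - t0))"
        by simp
      also have "\<dots> = (integral\<^sup>L M (g (Y n)) - integral\<^sup>L M (g t0)) / (Y n - t0)"
        using int by simp
      finally show ?case by simp
    qed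
    ultimately show "((\<lambda>y. (integral\<^sup>L M (g y) - integral\<^sup>L M (g t0)) / (y - t0)) \<circ> Y) \<longlonglongrightarrow> integral\<^sup>L M (g' t0)"
      by (simp add: comp_def Lim_transform_eventually)
  qed
  then show ?thesis using g'i by simp
qed

definition Sf :: "(nat \<Rightarrow> nat) \<Rightarrow> nat \<Rightarrow> (nat \<Rightarrow> real) \<Rightarrow> (nat \<Rightarrow> real) \<Rightarrow> real" where
  "Sf ls L \<theta> g = (\<Sum>k = 1..L. real k * (\<Sum>i = 1..ls k. bs ls \<theta> k i * g (bidx ls k i)))
     + (\<Sum>k = 1..L. \<Sum>i = 1..ls k. \<Sum>j = 1..ls (k - 1). wt ls \<theta> k i j * g (widx ls k i j))"

lemma Sf_add: "Sf ls L \<theta> (\<lambda>p. g1 p + g2 p) = Sf ls L \<theta> g1 + Sf ls L \<theta> g2"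
  by (simp add: Sf_def distrib_left sum.distrib)

lemma Sf_cmult: "Sf ls L \<theta> (\<lambda>p. c * g p) = c * Sf ls L \<theta> g"
  by (simp add: Sf_def distrib_left sum_distrib_left mult.left_commute)

lemma Sf_zero: "Sf ls L \<theta> (\<lambda>p. 0) = 0"
  by (simp add: Sf_def)

lemma Sf_sum: "finite J \<Longrightarrow> Sf ls L \<theta> (\<lambda>p. \<Sum>j\<in>J. h j p) = (\<Sum>j\<in>J. Sf ls L \<theta> (h j))"
  by (induction J rule: finite_induct) (simp_all add: Sf_zero Sf_add)

lemma Sf_delta_b:
  assumes k: "1 \<le> k" "k \<le> L" and m: "m \<in> {1..ls k}"
  shows "Sf ls L \<theta> (\<lambda>p. if p = bidx ls k m then 1 else 0) = real k * bs ls \<theta> k m"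
proof -
  have A: "(\<Sum>k' = 1..L. real k' * (\<Sum>i = 1..ls k'. bs ls \<theta> k' i * (if bidx ls k' i = bidx ls k m then 1 else 0)))
      = (\<Sum>k' = 1..L. if k' = k then real k * bs ls \<theta> k m else 0)"
  proof (rule sum.cong[OF refl])
    fix k' assume k': "k' \<in> {1..L}"
    have "(\<Sum>i = 1..ls k'. bs ls \<theta> k' i * (if bidx ls k' i = bidx ls k m then 1 else 0))
        = (\<Sum>i = 1..ls k'. if k' = k \<and> i = m then bs ls \<theta> k m else 0)"
      by (rule sum.cong[OF refl]) (use bidx_bidx[of k' k _ ls m] k k' m in auto)
    also have "\<dots> = (if k' = k then bs ls \<theta> k m else 0)" using m by (cases "k' = k") auto
    finally show "real k' * (\<Sum>i = 1..ls k'. bs ls \<theta> k' i * (if bidx ls k' i = bidx ls k m then 1 else 0))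
        = (if k' = k then real k * bs ls \<theta> k m else 0)" by simp
  qed
  have B: "(\<Sum>k' = 1..L. \<Sum>i = 1..ls k'. \<Sum>j = 1..ls (k' - 1). wt ls \<theta> k' i j * (if widx ls k' i j = bidx ls k m then 1 else 0)) = 0"
    by (intro sum.neutral ballI) (use widx_bidx[of _ k _ ls _ m] k m in auto)
  show ?thesis unfolding Sf_def using A B k by simp
qed

lemma Sf_delta_w:
  assumes k: "1 \<le> k" "k \<le> L" and m: "m \<in> {1..ls k}" and j: "j \<in> {1..ls (k - 1)}"
  shows "Sf ls L \<theta> (\<lambda>p. if p = widx ls k m j then y else 0) = wt ls \<theta> k m j * y"
proof -
  have A: "(\<Sum>k' = 1..L. real k' * (\<Sum>i = 1..ls k'. bs ls \<theta> k' i * (if bidx ls k' i = widx ls k m j then y else 0))) = 0"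
  proof -
    have "bidx ls k' i' \<noteq> widx ls k m j" if "1 \<le> k'" "i' \<in> {1..ls k'}" for k' i'
      using widx_bidx[of k k' m ls j i'] k m j that by auto
    then show ?thesis by (auto intro!: sum.neutral)
  qed
  have B: "(\<Sum>k' = 1..L. \<Sum>i = 1..ls k'. \<Sum>j' = 1..ls (k' - 1). wt ls \<theta> k' i j' * (if widx ls k' i j' = widx ls k m j then y else 0))
      = (\<Sum>k' = 1..L. if k' = k then wt ls \<theta> k m j * y else 0)"
  proof (rule sum.cong[OF refl])
    fix k' assume k': "k' \<in> {1..L}"
    have "(\<Sum>i = 1..ls k'. \<Sum>j' = 1..ls (k' - 1). wt ls \<theta> k' i j' * (if widx ls k' i j' = widx ls k m j then y else 0))
       = (\<Sum>i = 1..ls k'. \<Sum>j' = 1..ls (k' - 1). if k' = k \<and> i = m \<and> j' = j then wt ls \<theta> k m j * y else 0)"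
      by (intro sum.cong[OF refl]) (use widx_widx[of k' k _ ls _ m j] k k' m j in auto)
    also have "\<dots> = (if k' = k then wt ls \<theta> k m j * y else 0)"
    proof (cases "k' = k")
      case True
      have "(\<Sum>j' = 1..ls (k' - 1). if k' = k \<and> i = m \<and> j' = j then wt ls \<theta> k m j * y else 0)
          = (if i = m then wt ls \<theta> k m j * y else 0)" for i
        using j True by (cases "i = m") auto
      then show ?thesis using m True by simp
    qed simp
    finally show "(\<Sum>i = 1..ls k'. \<Sum>j' = 1..ls (k' - 1). wt ls \<theta> k' i j' * (if widx ls k' i j' = widx ls k m j then y else 0))
       = (if k' = k then wt ls \<theta> k m j * y else 0)" .
  qed
  show ?thesis unfolding Sf_def using A B k by simp
qed

lemma Sf_daff:
  assumes k: "1 \<le> k" "k \<le> L" and m: "m \<in> {1..ls k}"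
  shows "Sf ls L \<theta> (\<lambda>p. daff ls \<theta> k p y (dY p) m) = real k * bs ls \<theta> k m
     + (\<Sum>j = 1..ls (k - 1). wt ls \<theta> k m j * y j) + (\<Sum>j = 1..ls (k - 1). wt ls \<theta> k m j * Sf ls L \<theta> (\<lambda>p. dY p j))"
proof -
  have "Sf ls L \<theta> (\<lambda>p. daff ls \<theta> k p y (dY p) m) = Sf ls L \<theta> (\<lambda>p. if p = bidx ls k m then 1 else 0)
     + Sf ls L \<theta> (\<lambda>p. \<Sum>j = 1..ls (k - 1). if p = widx ls k m j then y j else 0)
     + Sf ls L \<theta> (\<lambda>p. \<Sum>j = 1..ls (k - 1). wt ls \<theta> k m j * dY p j)"
    unfolding daff_def by (simp only: Sf_add)
  also have "Sf ls L \<theta> (\<lambda>p. if p = bidx ls k m then 1 else 0) = real k * bs ls \<theta> k m"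
    by (rule Sf_delta_b) (use k m in auto)
  also have "Sf ls L \<theta> (\<lambda>p. \<Sum>j = 1..ls (k - 1). if p = widx ls k m j then y j else 0) = (\<Sum>j = 1..ls (k - 1). wt ls \<theta> k m j * y j)"
    by (subst Sf_sum) (auto intro!: sum.cong Sf_delta_w[where ls=ls and k=k and L=L and m=m and \<theta>=\<theta>, OF k m])
  also have "Sf ls L \<theta> (\<lambda>p. \<Sum>j = 1..ls (k - 1). wt ls \<theta> k m j * dY p j) = (\<Sum>j = 1..ls (k - 1). wt ls \<theta> k m j * Sf ls L \<theta> (\<lambda>p. dY p j))"
    by (subst Sf_sum) (auto intro!: sum.cong Sf_cmult)
  finally show ?thesis .
qed

lemma dnet_zero: "dd ls k < p \<Longrightarrow> j \<in> {1..ls k} \<Longrightarrow> dnet act dact ls \<theta> p k x j = 0"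
proof (induction k arbitrary: j)
  case 0 then show ?case by simp
next
  case (Suc k)
  have b: "p \<noteq> bidx ls (Suc k) j" using bidx_layer[of "Suc k" j ls] Suc.prems by auto
  have w: "p \<noteq> widx ls (Suc k) j j'" if "j' \<in> {1..ls k}" for j'
    using widx_layer[of "Suc k" j ls j'] bidx_layer[of "Suc k" j ls] Suc.prems that by auto
  have z: "dnet act dact ls \<theta> p k x j' = 0" if "j' \<in> {1..ls k}" for j'
    using Suc.IH[OF _ that] Suc.prems dd_mono[of k "Suc k" ls] by simp
  show ?case unfolding dnet_Suc daff_def using b w z by simp
qed

lemma dnet_bidx:
  assumes L: "1 \<le> L" and i: "i \<in> {1..ls L}" and m: "m \<in> {1..ls L}"
  shows "dnet act dact ls \<theta> (bidx ls L i) L x m = (if i = m then 1 else 0)"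
proof -
  obtain L' where L': "L = Suc L'" using L by (cases L) auto
  have b: "bidx ls L i = bidx ls L m \<longleftrightarrow> i = m" using bidx_bidx[of L L i ls m] L i m by auto
  have w: "bidx ls L i \<noteq> widx ls L m j" if "j \<in> {1..ls L'}" for j
    using widx_bidx[of L L m ls j i] L i m that L' by auto
  have z: "dnet act dact ls \<theta> (bidx ls L i) L' x j = 0" if "j \<in> {1..ls L'}" for j
    by (rule dnet_zero) (use that bidx_layer[of L i ls] L' L i in auto)
  show ?thesis unfolding L' dnet_Suc daff_def using b w z L' by simp
qed

definition dact_inf :: "nat \<Rightarrow> real \<Rightarrow> real" where
  "dact_inf k y = (if y > 0 then 1 else 0)"

lemma euler:
  assumes "k \<le> L"
  shows "\<forall>m\<in>{1..ls k}. Sf ls L \<theta> (\<lambda>p. dnet act_inf dact_inf ls \<theta> p k x m) = real k * netw act_inf ls \<theta> k x m"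
  using assms
proof (induction k)
  case 0 then show ?case by (simp add: Sf_zero)
next
  case (Suc k)
  show ?case
  proof
    fix m assume m: "m \<in> {1..ls (Suc k)}"
    have S: "Sf ls L \<theta> (\<lambda>p. dnet act_inf dact_inf ls \<theta> p (Suc k) x m) = real (Suc k) * bs ls \<theta> (Suc k) m
       + (\<Sum>j = 1..ls k. wt ls \<theta> (Suc k) m j * inp act_inf ls \<theta> k x j)
       + (\<Sum>j = 1..ls k. wt ls \<theta> (Suc k) m j * Sf ls L \<theta> (\<lambda>p. dact_inf k (netw act_inf ls \<theta> k x j) * dnet act_inf dact_inf ls \<theta> p k x j))"
      unfolding dnet_Suc using Sf_daff[of "Suc k" L m ls \<theta> "inp act_inf ls \<theta> k x"] Suc.prems m by simp
    have T: "(\<Sum>j = 1..ls k. wt ls \<theta> (Suc k) m j * Sf ls L \<theta> (\<lambda>p. dact_inf k (netw act_inf ls \<theta> k x j) * dnet act_inf dact_inf ls \<theta> p k x j))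
       = real k * (\<Sum>j = 1..ls k. wt ls \<theta> (Suc k) m j * inp act_inf ls \<theta> k x j)"
    proof (cases k)
      case 0 then show ?thesis by (simp add: Sf_zero)
    next
      case (Suc k')
      have "Sf ls L \<theta> (\<lambda>p. dact_inf k (netw act_inf ls \<theta> k x j) * dnet act_inf dact_inf ls \<theta> p k x j) = real k * inp act_inf ls \<theta> k x j"
        if j: "j \<in> {1..ls k}" for j
      proof -
        have ih: "Sf ls L \<theta> (\<lambda>p. dnet act_inf dact_inf ls \<theta> p k x j) = real k * netw act_inf ls \<theta> k x j"
          using Suc.IH Suc.prems j by auto
        show ?thesis unfolding Sf_cmult ih using \<open>k = Suc k'\<close>
          by (simp add: inp_def act_inf_def dact_inf_def max_def)
      qed
      then show ?thesis by (simp add: sum_distrib_left mult.left_commute)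
    qed
    show "Sf ls L \<theta> (\<lambda>p. dnet act_inf dact_inf ls \<theta> p (Suc k) x m) = real (Suc k) * netw act_inf ls \<theta> (Suc k) x m"
      unfolding S T netw_Suc aff_def by (simp add: algebra_simps)
  qed
qed

lemma pointwise_id:
  assumes L: "1 \<le> L"
  shows "Sf ls L \<theta> (\<lambda>p. \<Sum>m = 1..ls L. 2 * (netw act_inf ls \<theta> L x m - F m) * dnet act_inf dact_inf ls \<theta> p L x m)
     - real L * (\<Sum>i = 1..ls L. c i * (\<Sum>m = 1..ls L. 2 * (netw act_inf ls \<theta> L x m - F m) * dnet act_inf dact_inf ls \<theta> (bidx ls L i) L x m))
     = 2 * real L * (\<Sum>m = 1..ls L. (netw act_inf ls \<theta> L x m - F m) * (netw act_inf ls \<theta> L x m - c m))"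
proof -
  have A: "Sf ls L \<theta> (\<lambda>p. \<Sum>m = 1..ls L. 2 * (netw act_inf ls \<theta> L x m - F m) * dnet act_inf dact_inf ls \<theta> p L x m)
     = (\<Sum>m = 1..ls L. 2 * (netw act_inf ls \<theta> L x m - F m) * (real L * netw act_inf ls \<theta> L x m))"
    by (subst Sf_sum) (auto intro!: sum.cong simp: Sf_cmult euler[of L L, rule_format])
  have B: "(\<Sum>m = 1..ls L. 2 * (netw act_inf ls \<theta> L x m - F m) * dnet act_inf dact_inf ls \<theta> (bidx ls L i) L x m)
       = 2 * (netw act_inf ls \<theta> L x i - F i)" if i: "i \<in> {1..ls L}" for i
  proof -
    have "(\<Sum>m = 1..ls L. 2 * (netw act_inf ls \<theta> L x m - F m) * dnet act_inf dact_inf ls \<theta> (bidx ls L i) L x m)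
       = (\<Sum>m = 1..ls L. if i = m then 2 * (netw act_inf ls \<theta> L x m - F m) else 0)"
      by (rule sum.cong) (use dnet_bidx[where ls=ls and L=L, OF L i] in auto)
    also have "\<dots> = 2 * (netw act_inf ls \<theta> L x i - F i)" using i by simp
    finally show ?thesis .
  qed
  have B': "(\<Sum>i = 1..ls L. c i * (\<Sum>m = 1..ls L. 2 * (netw act_inf ls \<theta> L x m - F m) * dnet act_inf dact_inf ls \<theta> (bidx ls L i) L x m))
     = (\<Sum>i = 1..ls L. c i * (2 * (netw act_inf ls \<theta> L x i - F i)))"
    by (rule sum.cong) (use B in auto)
  show ?thesis unfolding A B'
    by (simp add: sum_distrib_left sum_subtractf[symmetric] algebra_simps)
qed

lemma sum_split_nat: "(\<Sum>p = 1..(a::nat) + b. g p) = (\<Sum>p = 1..a. g p) + (\<Sum>q = 1..b. g (a + q))"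
proof (induction b)
  case 0 then show ?case by simp
next
  case (Suc b)
  have "(\<Sum>p = 1..a + Suc b. g p) = g (Suc (a + b)) + (\<Sum>p = 1..a + b. g p)"
    by (subst add_Suc_right, rule sum.nat_ivl_Suc') simp
  then show ?case using Suc by (simp add: sum.nat_ivl_Suc' add.commute add.left_commute)
qed

lemma sum_rows: "(\<Sum>q = 1..(n::nat) * m. h q) = (\<Sum>i = 1..n. \<Sum>j = 1..m. h ((i - 1) * m + j))"
proof (induction n)
  case 0 then show ?case by simp
next
  case (Suc n)
  have "(\<Sum>q = 1..Suc n * m. h q) = (\<Sum>q = 1..n * m + m. h q)" by (simp add: add.commute)
  also have "\<dots> = (\<Sum>q = 1..n * m. h q) + (\<Sum>j = 1..m. h (n * m + j))" by (rule sum_split_nat)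
  finally show ?case using Suc by (simp add: sum.nat_ivl_Suc')
qed

lemma sum_dd: "(\<Sum>p = 1..dd ls L. g p) = (\<Sum>k = 1..L. (\<Sum>i = 1..ls k. \<Sum>j = 1..ls (k - 1). g (widx ls k i j)) + (\<Sum>i = 1..ls k. g (bidx ls k i)))"
proof (induction L)
  case 0 then show ?case by (simp add: dd_def)
next
  case (Suc L)
  have "(\<Sum>p = 1..dd ls (Suc L). g p) = (\<Sum>p = 1..dd ls L + (ls (Suc L) * ls L + ls (Suc L)). g p)"
    by (simp add: dd_Suc algebra_simps)
  also have "\<dots> = (\<Sum>p = 1..dd ls L. g p) + (\<Sum>q = 1..ls (Suc L) * ls L + ls (Suc L). g (dd ls L + q))"
    by (rule sum_split_nat)
  also have "(\<Sum>q = 1..ls (Suc L) * ls L + ls (Suc L). g (dd ls L + q))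
      = (\<Sum>q = 1..ls (Suc L) * ls L. g (dd ls L + q)) + (\<Sum>i = 1..ls (Suc L). g (dd ls L + (ls (Suc L) * ls L + i)))"
    by (rule sum_split_nat)
  also have "(\<Sum>q = 1..ls (Suc L) * ls L. g (dd ls L + q)) = (\<Sum>i = 1..ls (Suc L). \<Sum>j = 1..ls L. g (dd ls L + ((i - 1) * ls L + j)))"
    by (rule sum_rows)
  finally show ?case using Suc by (simp add: widx_def bidx_def algebra_simps)
qed

lemma Sf_lin1: "Sf ls L (\<lambda>i. \<theta> i - \<gamma> * g i) h = Sf ls L \<theta> h - \<gamma> * Sf ls L g h"
  by (simp add: Sf_def bs_eq wt_eq algebra_simps sum_subtractf sum.distrib sum_distrib_left)

lemma Sf_sym: "Sf ls L \<theta> g = Sf ls L g \<theta>"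
  by (simp add: Sf_def bs_eq wt_eq mult.commute)

lemma Vfun_Sf: "Vfun ls L c \<theta> = Sf ls L \<theta> \<theta> - 2 * real L * (\<Sum>i = 1..ls L. c i * \<theta> (bidx ls L i))"
  by (simp add: Vfun_def Sf_def bs_eq wt_eq sum.distrib power2_eq_square)

lemma V_diff: "Vfun ls L c (\<lambda>i. \<theta> i - \<gamma> * g i) - Vfun ls L c \<theta>
   = \<gamma>\<^sup>2 * Sf ls L g g - 2 * \<gamma> * (Sf ls L \<theta> g - real L * (\<Sum>i = 1..ls L. c i * g (bidx ls L i)))"
proof -
  have "Sf ls L (\<lambda>i. \<theta> i - \<gamma> * g i) (\<lambda>i. \<theta> i - \<gamma> * g i) = Sf ls L \<theta> \<theta> - 2 * \<gamma> * Sf ls L \<theta> g + \<gamma>\<^sup>2 * Sf ls L g g"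
    unfolding Sf_lin1 by (subst (1 2) Sf_sym) (simp add: Sf_lin1 power2_eq_square algebra_simps Sf_sym[of ls L g \<theta>])
  then show ?thesis unfolding Vfun_Sf
    by (simp add: algebra_simps sum_subtractf sum_distrib_left)
qed

lemma Rs_low:
  fixes R :: "real \<Rightarrow> real \<Rightarrow> real" and A s z :: real
  assumes Rl: "\<forall>r\<ge>1. \<forall>x. x \<le> A / r \<longrightarrow> R r x = 0" and A: "0 < A" and s: "1 \<le> s" and z: "z \<le> 0"
  shows "R s z = 0 \<and> deriv (R s) z = 0"
proof -
  have As: "0 < A / s" using A s by simp
  have eq: "\<And>y. y \<in> {..< A / s} \<Longrightarrow> 0 = R s y" using Rl s by auto
  have "((\<lambda>_. 0) has_real_derivative 0) (at z)" by simp
  then have "(R s has_real_derivative 0) (at z)"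
    by (rule has_field_derivative_transform_within_open[OF _ open_lessThan]) (use z As eq in auto)
  then show ?thesis using eq[of z] z As by (auto intro: DERIV_imp_deriv)
qed

lemma Rs_high:
  fixes R :: "real \<Rightarrow> real \<Rightarrow> real" and B s z :: real
  assumes Rh: "\<forall>r\<ge>1. \<forall>z. z \<ge> B / r \<longrightarrow> R r z = z" and s: "1 \<le> s" and z: "B / s < z"
  shows "R s z = z \<and> deriv (R s) z = 1"
proof -
  have eq: "\<And>y. y \<in> {B / s <..} \<Longrightarrow> y = R s y" using Rh s by auto
  have "((\<lambda>y. y) has_real_derivative 1) (at z)" by (rule DERIV_ident)
  then have "(R s has_real_derivative 1) (at z)"
    by (rule has_field_derivative_transform_within_open[OF _ open_greaterThan]) (use z eq in auto)
  then show ?thesis using eq[of z] z by (auto intro: DERIV_imp_deriv)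
qed

lemma act_conv:
  fixes R :: "real \<Rightarrow> real \<Rightarrow> real" and A B z :: real
  assumes Rl: "\<forall>r\<ge>1. \<forall>x. x \<le> A / r \<longrightarrow> R r x = 0" and Rh: "\<forall>r\<ge>1. \<forall>z. z \<ge> B / r \<longrightarrow> R r z = z"
    and A: "0 < A" "A < B" and k: "1 \<le> k"
  shows "eventually (\<lambda>r. act_r R r k z = act_inf k z \<and> deriv (R (r powr (1 / real k))) z = dact_inf k z) at_top"
proof -
  have lim: "filterlim (\<lambda>r::real. r powr (1 / real k)) at_top at_top"
    by (rule real_powr_at_top) (use k in auto)
  have ev1: "eventually (\<lambda>r::real. 1 \<le> r) at_top" by (rule eventually_ge_at_top)
  have s1: "1 \<le> r powr (1 / real k)" if "1 \<le> r" for r :: real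
    using that by (intro ge_one_powr_ge_zero) auto
  show ?thesis
  proof (cases "z \<le> 0")
    case True
    show ?thesis using ev1
    proof eventually_elim
      case (elim r)
      from Rs_low[OF Rl A(1) s1[OF elim] True] show ?case
        using True by (simp add: act_r_def act_inf_def dact_inf_def)
    qed
  next
    case False
    then have zp: "0 < z" by simp
    have ev2: "eventually (\<lambda>r. B / z + 1 \<le> r powr (1 / real k)) at_top"
      using lim unfolding filterlim_at_top by blast
    show ?thesis using ev1 ev2
    proof eventually_elim
      case (elim r)
      define s where "s = r powr (1 / real k)"
      have s: "1 \<le> s" "B / z + 1 \<le> s" using s1[OF elim(1)] elim(2) by (auto simp: s_def)
      have "B < z * s"
      proof -
        have "B / z < s" using s by linarith
        then show ?thesis using zp by (simp add: divide_less_eq mult.commute)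
      qed
      then have "B / s < z" using s by (simp add: divide_less_eq mult.commute)
      from Rs_high[OF Rh s(1) this] show ?case using zp by (simp add: act_r_def act_inf_def dact_inf_def s_def)
    qed
  qed
qed

lemma aff_cong: "\<forall>j\<in>{1..ls (k - 1)}. y j = y' j \<Longrightarrow> aff ls \<theta> k y = aff ls \<theta> k y'"
  by (auto simp: aff_def fun_eq_iff intro!: sum.cong)

lemma daff_cong: "\<forall>j\<in>{1..ls (k - 1)}. y j = y' j \<Longrightarrow> \<forall>j\<in>{1..ls (k - 1)}. dy j = dy' j \<Longrightarrow> daff ls \<theta> k p y dy = daff ls \<theta> k p y' dy'"
  by (auto simp: daff_def fun_eq_iff intro!: sum.cong)

lemma net_conv:
  fixes actr dactr :: "real \<Rightarrow> nat \<Rightarrow> real \<Rightarrow> real"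
  assumes sc: "\<And>k z. 1 \<le> k \<Longrightarrow> eventually (\<lambda>r. actr r k z = act_inf k z \<and> dactr r k z = dact_inf k z) at_top"
  shows "eventually (\<lambda>r. netw (actr r) ls \<theta> k x = netw act_inf ls \<theta> k x
            \<and> dnet (actr r) (dactr r) ls \<theta> p k x = dnet act_inf dact_inf ls \<theta> p k x) at_top"
proof (induction k)
  case 0 then show ?case by simp
next
  case (Suc k)
  show ?case
  proof (cases k)
    case 0 then show ?thesis by simp
  next
    case (Suc k')
    have ev: "eventually (\<lambda>r. \<forall>j\<in>{1..ls k}. actr r k (netw act_inf ls \<theta> k x j) = act_inf k (netw act_inf ls \<theta> k x j)
        \<and> dactr r k (netw act_inf ls \<theta> k x j) = dact_inf k (netw act_inf ls \<theta> k x j)) at_top"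
      by (rule eventually_ball_finite) (use sc Suc in auto)
    show ?thesis using Suc.IH ev
    proof eventually_elim
      case (elim r)
      have i: "\<forall>j\<in>{1..ls k}. inp (actr r) ls \<theta> k x j = inp act_inf ls \<theta> k x j"
        using elim Suc by (simp add: inp_def)
      have d: "\<forall>j\<in>{1..ls k}. dactr r k (netw (actr r) ls \<theta> k x j) * dnet (actr r) (dactr r) ls \<theta> p k x j
          = dact_inf k (netw act_inf ls \<theta> k x j) * dnet act_inf dact_inf ls \<theta> p k x j"
        using elim by simp
      show ?case unfolding netw_Suc dnet_Suc
        using aff_cong[of ls "Suc k"] daff_cong[of ls "Suc k"] i d by simp
    qed
  qed
qed

lemma grad_bound:
  assumes T0: "0 \<le> T" and X0: "0 \<le> X" and C0: "0 \<le> C"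
    and hth: "\<forall>q\<in>{1..dd ls L}. \<bar>\<theta> q\<bar> \<le> T" and hx: "\<forall>j\<in>{1..ls 0}. \<bar>x j\<bar> \<le> X"
    and hact: "\<forall>k y. \<bar>act k y\<bar> \<le> \<bar>y\<bar>" and hdact: "\<forall>k y. \<bar>dact k y\<bar> \<le> C"
    and hF: "\<forall>m\<in>{1..ls L}. \<bar>F m\<bar> \<le> Fb"
  shows "\<bar>\<Sum>m = 1..ls L. 2 * (netw act ls \<theta> L x m - F m) * dnet act dact ls \<theta> p L x m\<bar>
     \<le> real (ls L) * (2 * (nb ls T X L + Fb) * db ls T X C L)"
proof -
  have nbd: "\<forall>m\<in>{1..ls L}. \<bar>netw act ls \<theta> L x m\<bar> \<le> nb ls T X L \<and> \<bar>dnet act dact ls \<theta> p L x m\<bar> \<le> db ls T X C L"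
    by (rule net_bounds[OF T0 X0 C0 hth hx hact hdact]) simp
  have "\<bar>2 * (netw act ls \<theta> L x m - F m) * dnet act dact ls \<theta> p L x m\<bar> \<le> 2 * (nb ls T X L + Fb) * db ls T X C L"
    if m: "m \<in> {1..ls L}" for m
  proof -
    have a: "\<bar>2 * (netw act ls \<theta> L x m - F m)\<bar> \<le> 2 * (nb ls T X L + Fb)" using nbd hF m by fastforce
    have b: "\<bar>dnet act dact ls \<theta> p L x m\<bar> \<le> db ls T X C L" using nbd m by auto
    show ?thesis unfolding abs_mult[of "2 * _"] by (rule mult_mono[OF a b]) (use a in auto)
  qed
  then show ?thesis using sum_bound_const[of "{1..ls L}"] by simp
qed

lemma Sf_cong:
  assumes "\<forall>p\<in>{1..dd ls L}. g1 p = g2 p"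
  shows "Sf ls L \<theta> g1 = Sf ls L \<theta> g2"
proof -
  have b: "g1 (bidx ls k i) = g2 (bidx ls k i)" if "k \<in> {1..L}" "i \<in> {1..ls k}" for k i
    using assms bidx_range[of k L i ls] that by auto
  have w: "g1 (widx ls k i j) = g2 (widx ls k i j)" if "k \<in> {1..L}" "i \<in> {1..ls k}" "j \<in> {1..ls (k - 1)}" for k i j
    using assms widx_range[of k L i ls j] that by auto
  have A: "(\<Sum>k = 1..L. real k * (\<Sum>i = 1..ls k. bs ls \<theta> k i * g1 (bidx ls k i)))
     = (\<Sum>k = 1..L. real k * (\<Sum>i = 1..ls k. bs ls \<theta> k i * g2 (bidx ls k i)))"
    by (intro sum.cong refl arg_cong2[where f = "(*)"]) (use b in auto)
  have B: "(\<Sum>k = 1..L. \<Sum>i = 1..ls k. \<Sum>j = 1..ls (k - 1). wt ls \<theta> k i j * g1 (widx ls k i j))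
     = (\<Sum>k = 1..L. \<Sum>i = 1..ls k. \<Sum>j = 1..ls (k - 1). wt ls \<theta> k i j * g2 (widx ls k i j))"
    by (intro sum.cong refl arg_cong2[where f = "(*)"]) (use w in auto)
  show ?thesis unfolding Sf_def A B ..
qed

lemma Sf_integral:
  assumes "\<forall>p\<in>{1..dd ls L}. integrable M (Gf p)"
  shows "has_bochner_integral M (\<lambda>x. Sf ls L \<theta> (\<lambda>p. Gf p x)) (Sf ls L \<theta> (\<lambda>p. integral\<^sup>L M (Gf p)))"
proof -
  have b: "integrable M (Gf (bidx ls k i))" if "k \<in> {1..L}" "i \<in> {1..ls k}" for k i
    using assms bidx_range[of k L i ls] that by auto
  have w: "integrable M (Gf (widx ls k i j))" if "k \<in> {1..L}" "i \<in> {1..ls k}" "j \<in> {1..ls (k - 1)}" for k i j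
    using assms widx_range[of k L i ls j] that by auto
  show ?thesis unfolding Sf_def
    by (intro has_bochner_integral_add has_bochner_integral_sum has_bochner_integral_mult_right
        has_bochner_integral_integrable b w) auto
qed

theorem lemma4p1:
  fixes L :: nat and ls :: "nat \<Rightarrow> nat" and a b \<A> \<B> :: real
    and R :: "real \<Rightarrow> real \<Rightarrow> real"
    and \<mu> :: "(nat \<Rightarrow> real) measure"
    and f :: "(nat \<Rightarrow> real) \<Rightarrow> nat \<Rightarrow> real"
    and G :: "(nat \<Rightarrow> real) \<Rightarrow> nat \<Rightarrow> real"
    and \<gamma> :: real and \<theta> :: "nat \<Rightarrow> real"
  assumes L_pos: "L \<ge> 1"
    and ls_pos: "\<forall>k. ls k \<ge> 1"
    and ab: "a < b"
    and AB: "0 < \<A>" "\<A> < \<B>"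
    and R_C1: "\<forall>r\<ge>1. \<exists>R'. continuous_on UNIV R' \<and> (\<forall>x. (R r has_real_derivative R' x) (at x))"
    and R_low: "\<forall>r\<ge>1. \<forall>x. x \<le> \<A> / r \<longrightarrow> R r x = 0"
    and R_bnd: "\<forall>r\<ge>1. \<forall>y. 0 \<le> R r y \<and> R r y \<le> max y 0"
    and R_high: "\<forall>r\<ge>1. \<forall>z. z \<ge> \<B> / r \<longrightarrow> R r z = z"
    and R_deriv_bdd: "\<exists>C. \<forall>r\<ge>1. \<forall>x. \<bar>deriv (R r) x\<bar> \<le> C"
    and mu_sets: "sets \<mu> = sets (restrict_space (Pi\<^sub>M {1..ls 0} (\<lambda>_. borel)) (cube (ls 0) a b))"
    and mu_fin: "emeasure \<mu> (space \<mu>) \<noteq> \<infinity>"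
    and f_meas: "\<forall>i \<in> {1..ls L}. (\<lambda>x. f x i) \<in> borel_measurable \<mu>"
    and int_r: "\<forall>r\<ge>1. \<forall>\<phi>. integrable \<mu> (sqerr (act_r R r) ls L f \<phi>)"
    and int_inf: "\<forall>\<phi>. integrable \<mu> (sqerr act_inf ls L f \<phi>)"
    and G_def: "\<forall>\<phi>. (\<forall>i \<in> {1..dd ls L}. \<exists>l. ((\<lambda>r. grad_risk R ls L \<mu> f r \<phi> i) \<longlongrightarrow> l) at_top)
                   \<longrightarrow> (\<forall>i \<in> {1..dd ls L}. ((\<lambda>r. grad_risk R ls L \<mu> f r \<phi> i) \<longlongrightarrow> G \<phi> i) at_top)"
  defines "f0 \<equiv> f (zvec (ls 0))"
    and "I \<equiv> integral\<^sup>L \<mu> (\<lambda>x. \<Sum>i = 1..ls L.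
                (netw act_inf ls \<theta> L x i - f x i) * (netw act_inf ls \<theta> L x i - f (zvec (ls 0)) i))"
    and "nG \<equiv> (\<Sum>i = 1..dd ls L. (G \<theta> i)\<^sup>2)"
  shows "Vfun ls L f0 (\<lambda>i. \<theta> i - \<gamma> * G \<theta> i) - Vfun ls L f0 \<theta>
           = \<gamma>\<^sup>2 * nG
             + \<gamma>\<^sup>2 * (\<Sum>k = 1..L. \<Sum>i = 1..ls k.
                  (real k - 1) * (G \<theta> (ls k * ls (k - 1) + i + dd ls (k - 1)))\<^sup>2)
             - 4 * \<gamma> * real L * I
       \<and> Vfun ls L f0 (\<lambda>i. \<theta> i - \<gamma> * G \<theta> i) - Vfun ls L f0 \<theta>
           \<le> \<gamma>\<^sup>2 * real L * nG - 4 * \<gamma> * real L * I"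
proof -
  obtain C0 where C0: "\<forall>r\<ge>1. \<forall>x. \<bar>deriv (R r) x\<bar> \<le> C0" using R_deriv_bdd by blast
  define C where "C = max C0 1"
  have C: "\<forall>r\<ge>1. \<forall>x. \<bar>deriv (R r) x\<bar> \<le> C"
  proof (intro allI impI)
    fix r x :: real assume "1 \<le> r"
    then have "\<bar>deriv (R r) x\<bar> \<le> C0" using C0 by blast
    then show "\<bar>deriv (R r) x\<bar> \<le> C" by (simp add: C_def)
  qed
  have Cpos: "0 \<le> C" by (simp add: C_def)
  define X where "X = \<bar>a\<bar> + \<bar>b\<bar>"
  have X0: "0 \<le> X" by (simp add: X_def)
  have sp: "space \<mu> = cube (ls 0) a b"
    using sets_eq_imp_space_eq[OF mu_sets] by (auto simp: space_restrict_space space_PiM cube_def PiE_iff)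
  have hx: "\<forall>j\<in>{1..ls 0}. \<bar>x j\<bar> \<le> X" if "x \<in> space \<mu>" for x
    using that unfolding sp by (auto simp: cube_def PiE_iff X_def)
  have fin: "finite_measure \<mu>" using mu_fin by (rule finite_measureI)
  define F2 where "F2 x = (\<Sum>m = 1..ls L. (f x m)\<^sup>2)" for x
  obtain L' where L': "L = Suc L'" using L_pos by (cases L) auto
  have netw0: "netw act ls (\<lambda>_. 0) L x m = 0" for act x m
    unfolding L' netw_Suc aff_def by (simp add: bs_eq wt_eq)
  have "sqerr act_inf ls L f (\<lambda>_. 0) = F2"
    by (simp add: fun_eq_iff sqerr_def F2_def netw0)
  then have F2i: "integrable \<mu> F2" using int_inf by metis
  have fb: "\<bar>f x m\<bar> \<le> 1 + F2 x" if m: "m \<in> {1..ls L}" for x m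
  proof -
    have fa: "(f x m)\<^sup>2 \<le> F2 x" unfolding F2_def by (rule member_le_sum) (use m in auto)
    have yb: "\<bar>y\<bar> \<le> 1 + y\<^sup>2" for y :: real
    proof (cases "\<bar>y\<bar> \<le> 1")
      case True
      have "0 \<le> y\<^sup>2" by simp
      then show ?thesis using True by linarith
    next
      case False
      then have "\<bar>y\<bar> * 1 \<le> \<bar>y\<bar> * \<bar>y\<bar>" by (intro mult_left_mono) auto
      also have "\<bar>y\<bar> * \<bar>y\<bar> = y\<^sup>2" by (simp add: power2_eq_square)
      finally show ?thesis by simp
    qed
    show ?thesis using fa yb[of "f x m"] by linarith
  qed
  define T where "T = (\<Sum>q = 1..dd ls L. \<bar>\<theta> q\<bar>) + 1"
  have T0: "0 \<le> T" by (simp add: T_def sum_nonneg)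
  have parth: "\<forall>q\<in>{1..dd ls L}. \<bar>\<theta> q\<bar> \<le> T"
  proof
    fix q assume q: "q \<in> {1..dd ls L}"
    have "\<bar>\<theta> q\<bar> \<le> (\<Sum>q = 1..dd ls L. \<bar>\<theta> q\<bar>)" by (rule member_le_sum) (use q in auto)
    then show "\<bar>\<theta> q\<bar> \<le> T" by (simp add: T_def)
  qed
  have par: "\<forall>q\<in>{1..dd ls L}. \<bar>(\<theta>(p := t)) q\<bar> \<le> T" if p: "p \<in> {1..dd ls L}" and t: "\<bar>t - \<theta> p\<bar> < 1" for p t
  proof
    fix q assume q: "q \<in> {1..dd ls L}"
    show "\<bar>(\<theta>(p := t)) q\<bar> \<le> T"
    proof (cases "q = p")
      case True
      have "\<bar>\<theta> p\<bar> \<le> (\<Sum>q = 1..dd ls L. \<bar>\<theta> q\<bar>)" by (rule member_le_sum) (use p in auto)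
      then have "\<bar>\<theta> p\<bar> \<le> T - 1" by (simp add: T_def)
      then show ?thesis using True t by auto
    qed (use parth q in auto)
  qed
  define W where "W x = real (ls L) * (2 * (nb ls T X L + (1 + F2 x)) * db ls T X C L)" for x
  have Wi: "integrable \<mu> W"
  proof -
    have "integrable \<mu> (\<lambda>x. nb ls T X L + (1 + F2 x))"
      by (intro Bochner_Integration.integrable_add finite_measure.integrable_const[OF fin] F2i)
    then have "integrable \<mu> (\<lambda>x. (real (ls L) * 2 * db ls T X C L) * (nb ls T X L + (1 + F2 x)))"
      by (rule Bochner_Integration.integrable_mult_right)
    moreover have W_eq: "W = (\<lambda>x. (real (ls L) * 2 * db ls T X C L) * (nb ls T X L + (1 + F2 x)))"
      by (simp add: W_def fun_eq_iff)
    ultimately show ?thesis by simp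
  qed
  define actr where "actr r = act_r R r" for r
  define dactr where "dactr r k y = deriv (R (r powr (1 / real k))) y" for r k y
  have s1: "1 \<le> r powr (1 / real k)" if "1 \<le> r" for r :: real and k
    using that by (intro ge_one_powr_ge_zero) auto
  have actr_der: "(actr r k has_real_derivative dactr r k y) (at y)" if r: "1 \<le> r" for r k y
  proof -
    obtain R' where R': "\<forall>x. (R (r powr (1 / real k)) has_real_derivative R' x) (at x)"
      using R_C1 s1[OF r, of k] by blast
    then have "deriv (R (r powr (1 / real k))) y = R' y" by (intro DERIV_imp_deriv) auto
    then show ?thesis using R' by (simp add: actr_def act_r_def dactr_def)
  qed
  have actr_b: "\<forall>k y. \<bar>actr r k y\<bar> \<le> \<bar>y\<bar>" if r: "1 \<le> r" for r
  proof (intro allI)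
    fix k y
    have "0 \<le> R (r powr (1 / real k)) y \<and> R (r powr (1 / real k)) y \<le> max y 0" using R_bnd s1[OF r, of k] by blast
    then show "\<bar>actr r k y\<bar> \<le> \<bar>y\<bar>" by (auto simp: actr_def act_r_def)
  qed
  have dactr_b: "\<forall>k y. \<bar>dactr r k y\<bar> \<le> C" if r: "1 \<le> r" for r
    using C s1[OF r] by (auto simp: dactr_def)
  have ainf_b: "\<forall>k y. \<bar>act_inf k y\<bar> \<le> \<bar>y\<bar>" by (auto simp: act_inf_def)
  have dinf_b: "\<forall>k y. \<bar>dact_inf k y\<bar> \<le> C" by (auto simp: dact_inf_def C_def)
  define Gr where "Gr r p x = (\<Sum>m = 1..ls L. 2 * (netw (actr r) ls \<theta> L x m - f x m) * dnet (actr r) (dactr r) ls \<theta> p L x m)" for r p x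
  define Gi where "Gi p x = (\<Sum>m = 1..ls L. 2 * (netw act_inf ls \<theta> L x m - f x m) * dnet act_inf dact_inf ls \<theta> p L x m)" for p x
  have gradr: "integrable \<mu> (Gr r p) \<and> grad_risk R ls L \<mu> f r \<theta> p = integral\<^sup>L \<mu> (Gr r p)"
    if r: "1 \<le> r" and p: "p \<in> {1..dd ls L}" for r p
  proof -
    define g where "g t = sqerr (actr r) ls L f (\<theta>(p := t))" for t
    define g' where "g' t x = (\<Sum>m = 1..ls L. 2 * (netw (actr r) ls (\<theta>(p := t)) L x m - f x m) * dnet (actr r) (dactr r) ls (\<theta>(p := t)) p L x m)" for t x
    have D: "integrable \<mu> (g' (\<theta> p)) \<and> ((\<lambda>t. integral\<^sup>L \<mu> (g t)) has_real_derivative integral\<^sup>L \<mu> (g' (\<theta> p))) (at (\<theta> p))"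
    proof (rule DERIV_integral[where \<delta> = 1 and h = W])
      show "integrable \<mu> (g t)" for t using int_r r by (simp add: g_def actr_def)
      show "((\<lambda>s. g s x) has_real_derivative g' t x) (at t)" if "x \<in> space \<mu>" "\<bar>t - \<theta> p\<bar> < 1" for x t
      proof -
        have nd: "((\<lambda>s. netw (actr r) ls (\<theta>(p := s)) L x m) has_real_derivative dnet (actr r) (dactr r) ls (\<theta>(p := t)) p L x m) (at t)" for m
          using netw_deriv[of "actr r" "dactr r" ls "\<theta>(p := t)" p L x m, OF actr_der[OF r]] by simp
        have "((\<lambda>s. (netw (actr r) ls (\<theta>(p := s)) L x m - f x m)\<^sup>2) has_real_derivative
             2 * (netw (actr r) ls (\<theta>(p := t)) L x m - f x m) * dnet (actr r) (dactr r) ls (\<theta>(p := t)) p L x m) (at t)" for m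
          using DERIV_power[OF DERIV_diff[OF nd[of m] DERIV_const[of "f x m"]], of 2]
          by (rule DERIV_cong) (simp add: algebra_simps)
        then show ?thesis unfolding g_def g'_def sqerr_def by (intro DERIV_sum) auto
      qed
      show "\<bar>g' t x\<bar> \<le> W x" if x: "x \<in> space \<mu>" and t: "\<bar>t - \<theta> p\<bar> < 1" for x t
        unfolding g'_def W_def
        by (rule grad_bound[OF T0 X0 Cpos par[OF p t] hx[OF x] actr_b[OF r] dactr_b[OF r]]) (use fb in auto)
    qed (use Wi in auto)
    have e1: "g' (\<theta> p) = Gr r p" by (simp add: fun_eq_iff g'_def Gr_def)
    have e2: "(\<lambda>t. risk R ls L \<mu> f r (\<theta>(p := t))) = (\<lambda>t. integral\<^sup>L \<mu> (g t))"
      by (simp add: fun_eq_iff risk_def g_def actr_def)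
    have "grad_risk R ls L \<mu> f r \<theta> p = deriv (\<lambda>t. integral\<^sup>L \<mu> (g t)) (\<theta> p)"
      using p by (simp add: grad_risk_def e2)
    also have "\<dots> = integral\<^sup>L \<mu> (g' (\<theta> p))" using D by (intro DERIV_imp_deriv) auto
    finally show ?thesis using D e1 by simp
  qed
  have sc: "eventually (\<lambda>r. actr r k z = act_inf k z \<and> dactr r k z = dact_inf k z) at_top" if "1 \<le> k" for k z
    using act_conv[OF R_low R_high AB that, of z] by (simp add: actr_def dactr_def)
  have conv: "eventually (\<lambda>r. Gr r p x = Gi p x) at_top" for p x
  proof -
    have ev: "eventually (\<lambda>r. netw (actr r) ls \<theta> L x = netw act_inf ls \<theta> L x
            \<and> dnet (actr r) (dactr r) ls \<theta> p L x = dnet act_inf dact_inf ls \<theta> p L x) at_top"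
      by (rule net_conv) (erule sc)
    show ?thesis using ev
    proof (rule eventually_mono)
      fix r assume "netw (actr r) ls \<theta> L x = netw act_inf ls \<theta> L x
            \<and> dnet (actr r) (dactr r) ls \<theta> p L x = dnet act_inf dact_inf ls \<theta> p L x"
      then have h1: "netw (actr r) ls \<theta> L x = netw act_inf ls \<theta> L x"
        and h2: "dnet (actr r) (dactr r) ls \<theta> p L x = dnet act_inf dact_inf ls \<theta> p L x" by auto
      show "Gr r p x = Gi p x" unfolding Gr_def Gi_def h1 h2 ..
    qed
  qed
  have lim_p: "integrable \<mu> (Gi p) \<and> ((\<lambda>r. grad_risk R ls L \<mu> f r \<theta> p) \<longlongrightarrow> integral\<^sup>L \<mu> (Gi p)) at_top"
    if p: "p \<in> {1..dd ls L}" for p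
  proof -
    define s where "s r = Gr (max r 1) p" for r
    have sm: "s r \<in> borel_measurable \<mu>" for r using gradr[of "max r 1" p] p by (auto simp: s_def)
    have evs: "eventually (\<lambda>r. s r x = Gi p x) at_top" for x
      using conv[of p x] eventually_ge_at_top[of "1::real"] by eventually_elim (simp add: s_def)
    have Gim: "Gi p \<in> borel_measurable \<mu>"
    proof (rule borel_measurable_LIMSEQ_real[where u = "\<lambda>n. s (real n)"])
      fix x
      have "eventually (\<lambda>n. s (real n) x = Gi p x) sequentially"
        using filterlim_iff[THEN iffD1, OF filterlim_real_sequentially] evs by blast
      then show "(\<lambda>n. s (real n) x) \<longlonglongrightarrow> Gi p x" by (rule tendsto_eventually)
    qed (rule sm)
    have bnd0: "norm (s r x) \<le> W x" if x: "x \<in> space \<mu>" for r :: real and x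
    proof -
      have r: "1 \<le> max r 1" by simp
      show ?thesis unfolding s_def Gr_def W_def real_norm_def
        by (rule grad_bound[OF T0 X0 Cpos parth hx[OF x] actr_b[OF r] dactr_b[OF r]]) (use fb in auto)
    qed
    have bnd: "\<forall>\<^sub>F r in at_top. AE x in \<mu>. norm (s r x) \<le> W x"
      using bnd0 by (intro always_eventually allI AE_I2) blast
    have lim: "AE x in \<mu>. ((\<lambda>r. s r x) \<longlongrightarrow> Gi p x) at_top"
      by (intro AE_I2 tendsto_eventually evs)
    have I1: "((\<lambda>r. integral\<^sup>L \<mu> (s r)) \<longlongrightarrow> integral\<^sup>L \<mu> (Gi p)) at_top"
      by (rule integral_dominated_convergence_at_top[OF Gim sm Wi lim bnd])
    have I2: "integrable \<mu> (Gi p)"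
      by (rule integrable_dominated_convergence_at_top[OF Gim sm Wi lim bnd])
    have ev: "eventually (\<lambda>r. integral\<^sup>L \<mu> (s r) = grad_risk R ls L \<mu> f r \<theta> p) at_top"
      using eventually_ge_at_top[of "1::real"]
    proof eventually_elim
      case (elim r)
      then have "max r 1 = r" by simp
      then show ?case using gradr[OF elim p] by (simp add: s_def)
    qed
    have "((\<lambda>r. grad_risk R ls L \<mu> f r \<theta> p) \<longlongrightarrow> integral\<^sup>L \<mu> (Gi p)) at_top"
      by (rule Lim_transform_eventually[OF I1 ev])
    then show ?thesis using I2 by simp
  qed
  have Gval: "G \<theta> p = integral\<^sup>L \<mu> (Gi p)" if p: "p \<in> {1..dd ls L}" for p
  proof -
    have "\<forall>i\<in>{1..dd ls L}. ((\<lambda>r. grad_risk R ls L \<mu> f r \<theta> i) \<longlongrightarrow> G \<theta> i) at_top"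
      using G_def lim_p by blast
    then have "((\<lambda>r. grad_risk R ls L \<mu> f r \<theta> p) \<longlongrightarrow> G \<theta> p) at_top" using p by blast
    with lim_p[OF p] show ?thesis using tendsto_unique[OF trivial_limit_at_top_linorder] by blast
  qed
  have Gint: "integrable \<mu> (Gi p)" if "p \<in> {1..dd ls L}" for p using lim_p that by blast
  have bL: "bidx ls L i \<in> {1..dd ls L}" if "i \<in> {1..ls L}" for i
    by (rule bidx_range) (use L_pos that in auto)
  have HS: "has_bochner_integral \<mu> (\<lambda>x. Sf ls L \<theta> (\<lambda>p. Gi p x)) (Sf ls L \<theta> (\<lambda>p. integral\<^sup>L \<mu> (Gi p)))"
    by (rule Sf_integral) (use Gint in auto)
  have HL: "has_bochner_integral \<mu> (\<lambda>x. \<Sum>i = 1..ls L. f0 i * Gi (bidx ls L i) x) (\<Sum>i = 1..ls L. f0 i * integral\<^sup>L \<mu> (Gi (bidx ls L i)))"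
    by (intro has_bochner_integral_sum has_bochner_integral_mult_right has_bochner_integral_integrable Gint bL)
  have HD: "has_bochner_integral \<mu> (\<lambda>x. Sf ls L \<theta> (\<lambda>p. Gi p x) - real L * (\<Sum>i = 1..ls L. f0 i * Gi (bidx ls L i) x))
      (Sf ls L \<theta> (\<lambda>p. integral\<^sup>L \<mu> (Gi p)) - real L * (\<Sum>i = 1..ls L. f0 i * integral\<^sup>L \<mu> (Gi (bidx ls L i))))"
    by (intro has_bochner_integral_diff has_bochner_integral_mult_right HS HL)
  define Iint where "Iint = (\<lambda>x. \<Sum>i = 1..ls L.
                (netw act_inf ls \<theta> L x i - f x i) * (netw act_inf ls \<theta> L x i - f (zvec (ls 0)) i))"
  have pw: "Sf ls L \<theta> (\<lambda>p. Gi p x) - real L * (\<Sum>i = 1..ls L. f0 i * Gi (bidx ls L i) x) = 2 * real L * Iint x" for x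
    unfolding Gi_def Iint_def f0_def by (rule pointwise_id[OF L_pos])
  have HI: "has_bochner_integral \<mu> (\<lambda>x. (2 * real L) * Iint x)
      (Sf ls L \<theta> (\<lambda>p. integral\<^sup>L \<mu> (Gi p)) - real L * (\<Sum>i = 1..ls L. f0 i * integral\<^sup>L \<mu> (Gi (bidx ls L i))))"
    using HD unfolding pw .
  have L0: "2 * real L \<noteq> 0" using L_pos by simp
  have I_eq: "I = integral\<^sup>L \<mu> Iint" unfolding I_def Iint_def ..
  have key0: "Sf ls L \<theta> (\<lambda>p. integral\<^sup>L \<mu> (Gi p)) - real L * (\<Sum>i = 1..ls L. f0 i * integral\<^sup>L \<mu> (Gi (bidx ls L i)))
      = 2 * real L * I"
    using HI unfolding has_bochner_integral_iff I_eq by simp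
  have e1: "Sf ls L \<theta> (G \<theta>) = Sf ls L \<theta> (\<lambda>p. integral\<^sup>L \<mu> (Gi p))"
    by (rule Sf_cong) (use Gval in auto)
  have e2: "(\<Sum>i = 1..ls L. f0 i * G \<theta> (bidx ls L i)) = (\<Sum>i = 1..ls L. f0 i * integral\<^sup>L \<mu> (Gi (bidx ls L i)))"
    by (rule sum.cong) (use Gval bL in auto)
  have key: "Sf ls L \<theta> (G \<theta>) - real L * (\<Sum>i = 1..ls L. f0 i * G \<theta> (bidx ls L i)) = 2 * real L * I"
    unfolding e1 e2 by (rule key0)
  have VD: "Vfun ls L f0 (\<lambda>i. \<theta> i - \<gamma> * G \<theta> i) - Vfun ls L f0 \<theta>
     = \<gamma>\<^sup>2 * Sf ls L (G \<theta>) (G \<theta>) - 2 * \<gamma> * (Sf ls L \<theta> (G \<theta>) - real L * (\<Sum>i = 1..ls L. f0 i * G \<theta> (bidx ls L i)))"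
    by (rule V_diff)
  define S where "S k = (\<Sum>i = 1..ls k. (G \<theta> (bidx ls k i))\<^sup>2)" for k
  define Wk where "Wk k = (\<Sum>i = 1..ls k. \<Sum>j = 1..ls (k - 1). (G \<theta> (widx ls k i j))\<^sup>2)" for k
  have S0: "0 \<le> S k" for k by (simp add: S_def sum_nonneg)
  have W0: "0 \<le> Wk k" for k by (simp add: Wk_def sum_nonneg)
  have nG_eq: "nG = (\<Sum>k = 1..L. Wk k + S k)" unfolding nG_def S_def Wk_def by (rule sum_dd)
  have Sf_eq: "Sf ls L (G \<theta>) (G \<theta>) = (\<Sum>k = 1..L. real k * S k) + (\<Sum>k = 1..L. Wk k)"
    by (simp add: Sf_def bs_eq wt_eq power2_eq_square S_def Wk_def)
  have E: "(\<Sum>k = 1..L. \<Sum>i = 1..ls k. (real k - 1) * (G \<theta> (bidx ls k i))\<^sup>2) = (\<Sum>k = 1..L. (real k - 1) * S k)"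
    by (simp add: S_def sum_distrib_left)
  have E2: "(\<Sum>k = 1..L. real k * S k) = (\<Sum>k = 1..L. S k) + (\<Sum>k = 1..L. (real k - 1) * S k)"
    by (simp add: sum.distrib[symmetric] algebra_simps)
  have SGG: "Sf ls L (G \<theta>) (G \<theta>) = nG + (\<Sum>k = 1..L. \<Sum>i = 1..ls k. (real k - 1) * (G \<theta> (bidx ls k i))\<^sup>2)"
    unfolding Sf_eq nG_eq E E2 by (simp add: sum.distrib)
  have ineq: "(\<Sum>k = 1..L. \<Sum>i = 1..ls k. (real k - 1) * (G \<theta> (bidx ls k i))\<^sup>2) \<le> (real L - 1) * nG"
  proof -
    have "(\<Sum>k = 1..L. (real k - 1) * S k) \<le> (\<Sum>k = 1..L. (real L - 1) * S k)"
      by (intro sum_mono mult_right_mono S0) auto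
    also have "\<dots> = (real L - 1) * (\<Sum>k = 1..L. S k)" by (simp add: sum_distrib_left)
    also have "\<dots> \<le> (real L - 1) * nG"
      unfolding nG_eq using L_pos W0 by (intro mult_left_mono sum_mono) auto
    finally show ?thesis unfolding E .
  qed
  have bidx_eq: "\<And>k i. bidx ls k i = ls k * ls (k - 1) + i + dd ls (k - 1)" by (simp add: bidx_def)
  have first: "Vfun ls L f0 (\<lambda>i. \<theta> i - \<gamma> * G \<theta> i) - Vfun ls L f0 \<theta>
     = \<gamma>\<^sup>2 * nG + \<gamma>\<^sup>2 * (\<Sum>k = 1..L. \<Sum>i = 1..ls k. (real k - 1) * (G \<theta> (bidx ls k i))\<^sup>2) - 4 * \<gamma> * real L * I"
    unfolding VD key SGG by (simp add: algebra_simps)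
  have second: "\<gamma>\<^sup>2 * nG + \<gamma>\<^sup>2 * (\<Sum>k = 1..L. \<Sum>i = 1..ls k. (real k - 1) * (G \<theta> (bidx ls k i))\<^sup>2) \<le> \<gamma>\<^sup>2 * real L * nG"
  proof -
    have "\<gamma>\<^sup>2 * (\<Sum>k = 1..L. \<Sum>i = 1..ls k. (real k - 1) * (G \<theta> (bidx ls k i))\<^sup>2) \<le> \<gamma>\<^sup>2 * ((real L - 1) * nG)"
      by (rule mult_left_mono[OF ineq]) simp
    then show ?thesis by (simp add: algebra_simps)
  qed
  show ?thesis using first second unfolding bidx_eq by linarith
qed

end
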